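(* Let $1\le p<2$. There is a constant $C>0$ depending only on $p$ such that for all $n$ and all $a=(a_i)_{i=1}^n$, $b=(b_i)_{i=1}^n$ real sequences, writing $ab=(a_1b_1,\dots,a_nb_n)$, $$s_p(ab)\le C\,s_p(a)\big(\|b\|_\infty+v_p(b)\big).$$
   Context: For a finite real sequence $x=(x_1,\dots,x_n)$, $s_p(x)=\big(\sup_{k\le n}\sup_{0=i_0<\dots<i_k=n}\sum_{j=0}^{k-1}\big|\sum_{\ell=i_j+1}^{i_{j+1}}x_\ell\big|^p\big)^{1/p}$ and $v_p(x)=\big(\sup_{k\le n}\sup_{0=i_0<\dots<i_k=n}\sum_{j=0}^{k-1}|x_{i_{j+1}}-x_{i_j+1}|^p\big)^{1/p}$; $\|b\|_\infty=\max_i|b_i|$. *)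

theory Defs
  imports Complex_Main
begin

text \<open>A finite real sequence x = (x_1,...,x_n) is represented by a function
  x :: nat => real together with its length n; only x 1, ..., x n matter.\<close>

definition is_partition :: "nat \<Rightarrow> nat \<Rightarrow> (nat \<Rightarrow> nat) \<Rightarrow> bool" where
  "is_partition n k i \<longleftrightarrow> k \<le> n \<and> i 0 = 0 \<and> i k = n \<and> (\<forall>j<k. i j < i (Suc j))"

definition s_var :: "real \<Rightarrow> nat \<Rightarrow> (nat \<Rightarrow> real) \<Rightarrow> real" where
  "s_var p n x = (Sup {(\<Sum>j<k. \<bar>\<Sum>l\<in>{i j<..i (Suc j)}. x l\<bar> powr p) | k i. is_partition n k i})
                  powr (1 / p)"

definition v_var :: "real \<Rightarrow> nat \<Rightarrow> (nat \<Rightarrow> real) \<Rightarrow> real" where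
  "v_var p n x = (Sup {(\<Sum>j<k. \<bar>x (i (Suc j)) - x (i j + 1)\<bar> powr p) | k i. is_partition n k i})
                  powr (1 / p)"

definition sup_norm :: "nat \<Rightarrow> (nat \<Rightarrow> real) \<Rightarrow> real" where
  "sup_norm n b = Max (insert 0 {\<bar>b i\<bar> | i. 1 \<le> i \<and> i \<le> n})"

end

theory Submission
  imports Defs "HOL-Analysis.Analysis"
begin


definition PS :: "(nat \<Rightarrow> nat \<Rightarrow> real) \<Rightarrow> nat \<Rightarrow> real set" where
  "PS f t = {(\<Sum>j<k. f (i j) (i (Suc j))) | k i. is_partition t k i}"

definition PF :: "(nat \<Rightarrow> nat \<Rightarrow> real) \<Rightarrow> nat \<Rightarrow> real" where
  "PF f t = Sup (PS f t)"

lemma incr_mono: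
  assumes "\<forall>j<k. (i::nat\<Rightarrow>nat) j < i (Suc j)" "j \<le> j'" "j' \<le> k"
  shows "i j \<le> i j'"
  using assms(2,3)
proof (induction j')
  case 0 then show ?case by simp
next
  case (Suc j')
  show ?case
  proof (cases "j = Suc j'")
    case False
    then have "i j \<le> i j'" using Suc by simp
    also have "\<dots> < i (Suc j')" using assms(1) Suc.prems by simp
    finally show ?thesis by simp
  qed simp
qed

lemma incr_ge:
  assumes "\<forall>j<k. (i::nat\<Rightarrow>nat) j < i (Suc j)" "j \<le> k"
  shows "i 0 + j \<le> i j"
  using assms(2)
proof (induction j)
  case (Suc j)
  then have "i 0 + j \<le> i j" by simp
  moreover have "i j < i (Suc j)" using assms(1) Suc.prems by simp
  ultimately show ?case by simp
qed simp

lemma PS_nonempty: "PS f t \<noteq> {}"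
proof (cases "t = 0")
  case True
  have "is_partition t 0 (\<lambda>_. 0)" using True by (simp add: is_partition_def)
  then show ?thesis unfolding PS_def by blast
next
  case False
  have "is_partition t 1 (\<lambda>j. if j = 0 then 0 else t)" using False by (simp add: is_partition_def)
  then show ?thesis unfolding PS_def by blast
qed

lemma PS_bdd: "bdd_above (PS f t)"
proof -
  define B where "B = Max ((\<lambda>(x,y). \<bar>f x y\<bar>) ` ({..t}\<times>{..t}))"
  have B0: "0 \<le> B" unfolding B_def
    by (rule order.trans[OF abs_ge_zero[of "f 0 0"]], rule Max_ge) auto
  have fB: "f x y \<le> B" if "x \<le> t" "y \<le> t" for x y
  proof -
    have "\<bar>f x y\<bar> \<le> B" unfolding B_def by (rule Max_ge) (use that in auto)
    then show ?thesis by simp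
  qed
  have "z \<le> real t * B" if "z \<in> PS f t" for z
  proof -
    obtain k i where z: "z = (\<Sum>j<k. f (i j) (i (Suc j)))" and P: "is_partition t k i"
      using \<open>z \<in> PS f t\<close> unfolding PS_def by blast
    have inc: "\<forall>j<k. i j < i (Suc j)" and ik: "i k = t" and kt: "k \<le> t" using P by (auto simp: is_partition_def)
    have "z \<le> (\<Sum>j<k. B)" unfolding z
    proof (rule sum_mono)
      fix j assume "j \<in> {..<k}"
      then have "i j \<le> t" "i (Suc j) \<le> t" using incr_mono[OF inc, of j k] incr_mono[OF inc, of "Suc j" k] ik by auto
      then show "f (i j) (i (Suc j)) \<le> B" by (rule fB)
    qed
    also have "\<dots> = real k * B" by simp
    also have "\<dots> \<le> real t * B" using kt B0 by (simp add: mult_right_mono)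
    finally show ?thesis .
  qed
  then show ?thesis by (rule bdd_aboveI)
qed

lemma PS_ext:
  assumes "z \<in> PS f u" "u < t"
  shows "z + f u t \<in> PS f t"
proof -
  obtain k i where z: "z = (\<Sum>j<k. f (i j) (i (Suc j)))" and P: "is_partition u k i"
    using assms(1) unfolding PS_def by blast
  define i' where "i' = i(Suc k := t)"
  have P': "is_partition t (Suc k) i'"
    using P assms(2) unfolding is_partition_def i'_def
    by (auto simp: less_Suc_eq)
  have "(\<Sum>j<Suc k. f (i' j) (i' (Suc j))) = z + f u t"
    using P unfolding z i'_def is_partition_def by (auto intro!: sum.cong)
  then show ?thesis using P' unfolding PS_def by (metis (mono_tags, lifting) mem_Collect_eq)
qed

lemma PS_zero: "PS f 0 = {0}"
proof -
  have "k = 0" if "is_partition 0 k i" for k i using that by (simp add: is_partition_def)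
  moreover have "is_partition 0 0 (\<lambda>_. 0)" by (simp add: is_partition_def)
  ultimately show ?thesis unfolding PS_def
    by (auto intro!: exI[of _ 0] exI[of _ "\<lambda>_. 0::nat"]) (metis lessThan_0 sum.empty)
qed

lemma PF_zero: "PF f 0 = 0"
  unfolding PF_def PS_zero by simp

lemma PF_ext: "u < t \<Longrightarrow> PF f u + f u t \<le> PF f t"
proof -
  assume ut: "u < t"
  have "PF f u \<le> PF f t - f u t" unfolding PF_def
  proof (rule cSup_least[OF PS_nonempty])
    fix z assume "z \<in> PS f u"
    then have "z + f u t \<le> Sup (PS f t)" using PS_ext ut PS_bdd by (intro cSup_upper) auto
    then show "z \<le> Sup (PS f t) - f u t" by simp
  qed
  then show ?thesis by simp
qed

lemma PF_mono:
  assumes "\<And>x y. 0 \<le> f x y" "u \<le> t"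
  shows "PF f u \<le> PF f t"
  using assms(2)
proof (induction t)
  case (Suc t)
  show ?case
  proof (cases "u = Suc t")
    case False
    then have "PF f u \<le> PF f t" using Suc by simp
    also have "\<dots> \<le> PF f t + f t (Suc t)" using assms(1) by simp
    also have "\<dots> \<le> PF f (Suc t)" by (rule PF_ext) simp
    finally show ?thesis .
  qed simp
qed simp

lemma PF_nonneg: "(\<And>x y. 0 \<le> f x y) \<Longrightarrow> 0 \<le> PF f t"
  using PF_mono[of f 0 t] PF_zero by simp

lemma PF_le:
  assumes "\<And>k i. is_partition t k i \<Longrightarrow> (\<Sum>j<k. f (i j) (i (Suc j))) \<le> B"
  shows "PF f t \<le> B"
  unfolding PF_def using assms by (intro cSup_least[OF PS_nonempty]) (auto simp: PS_def)



definition Asum :: "(nat \<Rightarrow> real) \<Rightarrow> nat \<Rightarrow> nat \<Rightarrow> real" where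
  "Asum a x y = (\<Sum>l\<in>{x<..y}. a l)"

definition RS :: "(nat \<Rightarrow> real) \<Rightarrow> (nat \<Rightarrow> real) \<Rightarrow> nat \<Rightarrow> (nat \<Rightarrow> nat) \<Rightarrow> nat \<Rightarrow> real" where
  "RS a b s u m = (\<Sum>r<m. Asum a (u r) (u (Suc r)) * (b (u r + 1) - b (s + 1)))"

lemma sum_split_add: "(\<Sum>r<x+(y::nat). (f r::real)) = (\<Sum>r<x. f r) + (\<Sum>r<y. f (x + r))"
  by (induction y) (auto simp: add.assoc)

lemma Asum_split:
  assumes "x \<le> y" "y \<le> z"
  shows "Asum a x z = Asum a x y + Asum a y z"
proof -
  have "{x<..z} = {x<..y} \<union> {y<..z}" using assms by auto
  then show ?thesis unfolding Asum_def by (simp add: sum.union_disjoint[symmetric] ivl_disj_int)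
qed

lemma RS_remove:
  assumes inc: "\<forall>j<Suc (Suc (q + d)). u j < u (Suc j)"
  shows "RS a b s u (Suc (Suc (q + d))) =
     RS a b s (\<lambda>j. if j < Suc q then u j else u (Suc j)) (Suc (q + d))
     + Asum a (u (Suc q)) (u (Suc (Suc q))) * (b (u (Suc q) + 1) - b (u q + 1))"
proof -
  define g where "g r = Asum a (u r) (u (Suc r)) * (b (u r + 1) - b (s + 1))" for r
  define u' where "u' = (\<lambda>j. if j < Suc q then u j else u (Suc j))"
  define g' where "g' r = Asum a (u' r) (u' (Suc r)) * (b (u' r + 1) - b (s + 1))" for r
  have e1: "Suc (Suc (q + d)) = q + (Suc (Suc d))" by simp
  have "RS a b s u (Suc (Suc (q + d))) = (\<Sum>r<q. g r) + (\<Sum>r<Suc (Suc d). g (q + r))"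
    unfolding RS_def g_def[symmetric] e1 by (rule sum_split_add)
  also have "(\<Sum>r<Suc (Suc d). g (q + r)) = g q + g (Suc q) + (\<Sum>r<d. g (q + 2 + r))"
  proof -
    have "Suc (Suc d) = 2 + d" by simp
    then have "(\<Sum>r<Suc (Suc d). g (q + r)) = (\<Sum>r<2. g (q + r)) + (\<Sum>r<d. g (q + (2 + r)))"
      using sum_split_add[of "\<lambda>r. g (q + r)" 2 d] by simp
    then show ?thesis by (simp add: numeral_2_eq_2 add.assoc)
  qed
  finally have L: "RS a b s u (Suc (Suc (q + d))) = (\<Sum>r<q. g r) + g q + g (Suc q) + (\<Sum>r<d. g (q + 2 + r))"
    by simp
  have e2: "Suc (q + d) = q + Suc d" by simp
  have "RS a b s u' (Suc (q + d)) = (\<Sum>r<q. g' r) + (\<Sum>r<Suc d. g' (q + r))"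
    unfolding RS_def g'_def[symmetric] e2 by (rule sum_split_add)
  also have "(\<Sum>r<Suc d. g' (q + r)) = g' q + (\<Sum>r<d. g' (q + 1 + r))"
    using sum_split_add[of "\<lambda>r. g' (q + r)" 1 d] by (simp add: add.assoc)
  finally have R: "RS a b s u' (Suc (q + d)) = (\<Sum>r<q. g' r) + g' q + (\<Sum>r<d. g' (q + 1 + r))"
    by simp
  have s1: "(\<Sum>r<q. g' r) = (\<Sum>r<q. g r)"
    by (rule sum.cong) (auto simp: g_def g'_def u'_def)
  have s2: "(\<Sum>r<d. g' (q + 1 + r)) = (\<Sum>r<d. g (q + 2 + r))"
    by (rule sum.cong) (auto simp: g_def g'_def u'_def)
  have sp: "Asum a (u q) (u (Suc (Suc q))) = Asum a (u q) (u (Suc q)) + Asum a (u (Suc q)) (u (Suc (Suc q)))"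
    by (rule Asum_split) (use inc in \<open>auto intro: less_imp_le\<close>)
  have s3: "g q + g (Suc q) = g' q + Asum a (u (Suc q)) (u (Suc (Suc q))) * (b (u (Suc q) + 1) - b (u q + 1))"
    unfolding g_def g'_def u'_def using sp by (simp add: algebra_simps)
  show ?thesis unfolding u'_def[symmetric] using L R s1 s2 s3 by simp
qed

lemma young_ind:
  assumes H: "\<And>m u. 2 \<le> m \<Longrightarrow> (\<forall>j<m. u j < u (Suc j)) \<Longrightarrow> u 0 = s \<Longrightarrow> u m = t \<Longrightarrow>
      (\<exists>q. Suc q < m \<and> \<bar>Asum a (u (Suc q)) (u (Suc (Suc q))) * (b (u (Suc q) + 1) - b (u q + 1))\<bar>
            \<le> K * real (m - 1) powr (-\<theta>))"
  shows "1 \<le> m \<Longrightarrow> (\<forall>j<m. u j < u (Suc j)) \<Longrightarrow> u 0 = s \<Longrightarrow> u m = t \<Longrightarrow>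
     \<bar>RS a b s u m\<bar> \<le> K * (\<Sum>k\<in>{1..<m}. real k powr (-\<theta>))"
proof (induction m arbitrary: u)
  case 0 then show ?case by simp
next
  case (Suc m)
  show ?case
  proof (cases "m = 0")
    case True
    then show ?thesis using Suc.prems by (simp add: RS_def)
  next
    case False
    obtain q where q: "Suc q < Suc m" and c: "\<bar>Asum a (u (Suc q)) (u (Suc (Suc q))) * (b (u (Suc q) + 1) - b (u q + 1))\<bar>
            \<le> K * real m powr (-\<theta>)"
      using H[of "Suc m" u] Suc.prems False by auto
    obtain d where d: "m = Suc (q + d)" using q by (metis less_Suc_eq_0_disj less_imp_Suc_add not_less_eq)
    define u' where "u' = (\<lambda>j. if j < Suc q then u j else u (Suc j))"
    have rem: "RS a b s u (Suc m) = RS a b s u' m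
      + Asum a (u (Suc q)) (u (Suc (Suc q))) * (b (u (Suc q) + 1) - b (u q + 1))"
      unfolding u'_def d using RS_remove[of q d u a b s] Suc.prems(2) d by simp
    have inc': "\<forall>j<m. u' j < u' (Suc j)"
    proof (intro allI impI)
      fix j assume "j < m"
      then show "u' j < u' (Suc j)"
        using Suc.prems(2) unfolding u'_def
        by (cases "Suc j < Suc q"; cases "j < Suc q") (auto dest: spec[of _ j] spec[of _ "Suc j"] intro: less_trans)
    qed
    have IH: "\<bar>RS a b s u' m\<bar> \<le> K * (\<Sum>k\<in>{1..<m}. real k powr (-\<theta>))"
      using Suc.IH[of u'] False inc' Suc.prems(3,4) q unfolding u'_def by auto
    have "\<bar>RS a b s u (Suc m)\<bar> \<le> \<bar>RS a b s u' m\<bar> + K * real m powr (-\<theta>)"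
      using rem c by linarith
    also have "\<dots> \<le> K * (\<Sum>k\<in>{1..<m}. real k powr (-\<theta>)) + K * real m powr (-\<theta>)"
      using IH by simp
    also have "\<dots> = K * (\<Sum>k\<in>{1..<Suc m}. real k powr (-\<theta>))"
      using False by (simp add: distrib_left)
    finally show ?thesis .
  qed
qed



lemma ph:
  fixes x y :: "nat \<Rightarrow> real"
  assumes N: "1 \<le> N" and nn: "\<And>q. q < N \<Longrightarrow> 0 \<le> x q \<and> 0 \<le> y q"
    and sx: "(\<Sum>q<N. x q) \<le> X" and sy: "(\<Sum>q<N. y q) \<le> Y"
  shows "\<exists>q<N. x q * y q \<le> X * Y / (real N)^2"
proof (rule ccontr)
  assume "\<not> ?thesis"
  then have big: "\<And>q. q < N \<Longrightarrow> X * Y / (real N)^2 < x q * y q" by (simp add: not_le)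
  have X0: "0 \<le> X" using sx sum_nonneg[of "{..<N}" x] nn by fastforce
  have Y0: "0 \<le> Y" using sy sum_nonneg[of "{..<N}" y] nn by fastforce
  have "0 < X"
  proof (rule ccontr)
    assume "\<not> 0 < X" then have "X = 0" using X0 by simp
    then have "(\<Sum>q<N. x q) \<le> 0" using sx by simp
    then have "x 0 = 0" using sum_nonneg_eq_0_iff[of "{..<N}" x] nn N
      by (metis (no_types, lifting) antisym finite_lessThan lessThan_iff less_le_trans
          nat_less_le sum_nonneg zero_less_one)
    then show False using big[of 0] N \<open>X = 0\<close> by simp
  qed
  have "0 < Y"
  proof (rule ccontr)
    assume "\<not> 0 < Y" then have "Y = 0" using Y0 by simp
    then have "(\<Sum>q<N. y q) \<le> 0" using sy by simp
    then have "y 0 = 0" using sum_nonneg_eq_0_iff[of "{..<N}" y] nn N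
      by (metis (no_types, lifting) antisym finite_lessThan lessThan_iff less_le_trans
          nat_less_le sum_nonneg zero_less_one)
    then show False using big[of 0] N \<open>Y = 0\<close> by simp
  qed
  define c where "c = sqrt (Y / X)"
  have c0: "0 < c" unfolding c_def using \<open>0 < X\<close> \<open>0 < Y\<close> by simp
  have each: "2 * sqrt (X * Y) / real N < x q * c + y q / c" if q: "q < N" for q
  proof -
    have "sqrt (X * Y / (real N)^2) < sqrt (x q * y q)" using big[OF q] by simp
    moreover have "sqrt (X * Y / (real N)^2) = sqrt (X * Y) / real N"
      by (simp add: real_sqrt_divide)
    moreover have "2 * sqrt (x q * y q) \<le> x q * c + y q / c"
    proof -
      have "sqrt ((x q * c) * (y q / c)) \<le> (x q * c + y q / c) / 2"
        by (rule arith_geo_mean_sqrt) (use nn[OF q] c0 in auto)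
      moreover have "(x q * c) * (y q / c) = x q * y q" using c0 by simp
      ultimately show ?thesis by simp
    qed
    ultimately show ?thesis by linarith
  qed
  have "(\<Sum>q<N. 2 * sqrt (X * Y) / real N) < (\<Sum>q<N. x q * c + y q / c)"
    by (rule sum_strict_mono) (use each N in \<open>auto simp: lessThan_empty_iff\<close>)
  also have "\<dots> = (\<Sum>q<N. x q) * c + (\<Sum>q<N. y q) / c"
    by (simp add: sum.distrib sum_distrib_right sum_divide_distrib)
  also have "\<dots> \<le> X * c + Y / c"
    using sx sy c0 by (intro add_mono mult_right_mono divide_right_mono) auto
  also have "X * c + Y / c = 2 * sqrt (X * Y)"
  proof -
    have sx: "sqrt X * sqrt X = X" "sqrt Y * sqrt Y = Y" using \<open>0 < X\<close> \<open>0 < Y\<close> by auto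
    have p: "0 < sqrt X" "0 < sqrt Y" using \<open>0 < X\<close> \<open>0 < Y\<close> by auto
    have cc: "c = sqrt Y / sqrt X" unfolding c_def by (simp add: real_sqrt_divide)
    have "X * c = sqrt X * sqrt Y" unfolding cc using p sx by (simp add: field_simps)
    moreover have "Y / c = sqrt X * sqrt Y" unfolding cc using p sx by (simp add: field_simps)
    ultimately show ?thesis by (simp add: real_sqrt_mult)
  qed
  finally show False using N by simp
qed



lemma pow2:
  fixes x y p :: real
  assumes "0 < p"
  shows "\<bar>x + y\<bar> powr p \<le> 2 powr p * (\<bar>x\<bar> powr p + \<bar>y\<bar> powr p)"
proof -
  define M where "M = max \<bar>x\<bar> \<bar>y\<bar>"
  have "\<bar>x + y\<bar> \<le> 2 * M" unfolding M_def by linarith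
  then have "\<bar>x + y\<bar> powr p \<le> (2 * M) powr p" using assms by (intro powr_mono2) auto
  also have "\<dots> = 2 powr p * M powr p" by (simp add: powr_mult)
  also have "M powr p \<le> \<bar>x\<bar> powr p + \<bar>y\<bar> powr p" unfolding M_def by (simp add: max_def)
  finally show ?thesis by simp
qed

lemma incr_sum:
  fixes F :: "nat \<Rightarrow> real"
  assumes mono: "\<And>x y. x \<le> y \<Longrightarrow> F x \<le> F y" and inc: "\<forall>j<N. w j < w (Suc j)"
  shows "(\<Sum>r<N. F (w r + 1) - F (w r)) \<le> F (w N) - F (w 0)"
  using inc
proof (induction N)
  case (Suc N)
  then have "(\<Sum>r<N. F (w r + 1) - F (w r)) \<le> F (w N) - F (w 0)" by simp
  moreover have "F (w N + 1) \<le> F (w (Suc N))" using mono Suc.prems by (simp add: Suc_leI)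
  ultimately show ?case by simp
qed simp

lemma H_holds:
  fixes a b Fa Fb :: "nat \<Rightarrow> real"
  assumes p: "1 \<le> p" and st: "s < t" and tn: "t \<le> n"
    and monoA: "\<And>x y. x \<le> y \<Longrightarrow> Fa x \<le> Fa y"
    and monoB: "\<And>x y. x \<le> y \<Longrightarrow> Fb x \<le> Fb y"
    and Ha: "\<And>x y. x < y \<Longrightarrow> y \<le> n \<Longrightarrow> \<bar>Asum a x y\<bar> powr p \<le> Fa y - Fa x"
    and Hb: "\<And>x y. x < y \<Longrightarrow> y \<le> n \<Longrightarrow> \<bar>b y - b (x + 1)\<bar> powr p \<le> Fb y - Fb x"
    and m: "2 \<le> m" and inc: "\<forall>j<m. u j < u (Suc j)" and u0: "u 0 = s" and um: "u m = t"
  shows "\<exists>q. Suc q < m \<and> \<bar>Asum a (u (Suc q)) (u (Suc (Suc q))) * (b (u (Suc q) + 1) - b (u q + 1))\<bar>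
            \<le> ((Fa t - Fa s) * (3 * 2 powr p * (Fb n - Fb 0))) powr (1 / p) * real (m - 1) powr (- (2 / p))"
proof -
  define N where "N = m - 1"
  have N1: "1 \<le> N" and mN: "m = Suc N" using m unfolding N_def by auto
  have ule: "u j \<le> t" if "j \<le> m" for j using incr_mono[OF inc that] um by simp
  have uge: "s \<le> u j" if "j \<le> m" for j using incr_mono[OF inc, of 0 j] that u0 by simp
  define x where "x q = Fa (u (Suc (Suc q))) - Fa (u (Suc q))" for q
  define y where "y q = 2 powr p * ((Fb (u (Suc q)) - Fb (u q)) + (Fb (u (Suc q) + 1) - Fb (u (Suc q) - 1)))" for q
  define X where "X = Fa t - Fa s"
  define Y where "Y = 3 * 2 powr p * (Fb n - Fb 0)"
  have nn: "0 \<le> x q \<and> 0 \<le> y q" if "q < N" for q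
  proof -
    have "u (Suc q) \<le> u (Suc (Suc q))" "u q \<le> u (Suc q)" using inc that mN by (auto intro: less_imp_le)
    then show ?thesis unfolding x_def y_def using monoA monoB
      by (auto intro!: mult_nonneg_nonneg add_nonneg_nonneg simp: diff_le_eq)
  qed
  have sx: "(\<Sum>q<N. x q) \<le> X"
  proof -
    have "(\<Sum>q<N. x q) = Fa (u (Suc N)) - Fa (u (Suc 0))"
      unfolding x_def using sum_lessThan_telescope[of "\<lambda>q. Fa (u (Suc q))" N] by simp
    also have "\<dots> \<le> X" unfolding X_def using mN um monoA[OF uge[of 1]] m by simp
    finally show ?thesis .
  qed
  have sy: "(\<Sum>q<N. y q) \<le> Y"
  proof -
    have e: "(\<Sum>q<N. y q) = 2 powr p * ((\<Sum>q<N. Fb (u (Suc q)) - Fb (u q))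
        + (\<Sum>q<N. Fb (u (Suc q) + 1) - Fb (u (Suc q)))
        + (\<Sum>q<N. Fb ((u (Suc q) - 1) + 1) - Fb (u (Suc q) - 1)))"
    proof -
      have "u (Suc q) - 1 + 1 = u (Suc q)" if "q < N" for q
      proof -
        have "u 0 < u (Suc q)" using incr_mono[OF inc, of 1 "Suc q"] inc mN that by auto
        then show ?thesis by simp
      qed
      then show ?thesis unfolding y_def sum_distrib_left[symmetric] sum.distrib[symmetric]
        by (intro arg_cong[where f="\<lambda>z. 2 powr p * z"] sum.cong) auto
    qed
    have t1: "(\<Sum>q<N. Fb (u (Suc q)) - Fb (u q)) \<le> Fb n - Fb 0"
    proof -
      have "(\<Sum>q<N. Fb (u (Suc q)) - Fb (u q)) = Fb (u N) - Fb (u 0)"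
        by (rule sum_lessThan_telescope)
      also have "\<dots> \<le> Fb n - Fb 0" using monoB[of "u N" n] monoB[of 0 "u 0"] ule[of N] mN tn by simp
      finally show ?thesis .
    qed
    have t2: "(\<Sum>q<N. Fb (u (Suc q) + 1) - Fb (u (Suc q))) \<le> Fb n - Fb 0"
    proof -
      have "(\<Sum>q<N. Fb (u (Suc q) + 1) - Fb (u (Suc q))) \<le> Fb (u (Suc N)) - Fb (u (Suc 0))"
        using incr_sum[of Fb N "\<lambda>q. u (Suc q)"] monoB inc mN by simp
      also have "\<dots> \<le> Fb n - Fb 0" using monoB[of "u (Suc N)" n] monoB[of 0 "u 1"] ule[of "Suc N"] mN tn by simp
      finally show ?thesis .
    qed
    have t3: "(\<Sum>q<N. Fb ((u (Suc q) - 1) + 1) - Fb (u (Suc q) - 1)) \<le> Fb n - Fb 0"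
    proof -
      have i3: "\<forall>j<N. u (Suc j) - 1 < u (Suc (Suc j)) - 1"
      proof (intro allI impI)
        fix j assume "j < N"
        then have "u (Suc j) < u (Suc (Suc j))" "u 0 < u (Suc j)" using inc mN incr_mono[OF inc, of 1 "Suc j"]
          by auto
        then show "u (Suc j) - 1 < u (Suc (Suc j)) - 1" by linarith
      qed
      have "(\<Sum>q<N. Fb ((u (Suc q) - 1) + 1) - Fb (u (Suc q) - 1)) \<le> Fb (u (Suc N) - 1) - Fb (u (Suc 0) - 1)"
        using incr_sum[of Fb N "\<lambda>q. u (Suc q) - 1", OF _ i3] monoB by simp
      also have "\<dots> \<le> Fb n - Fb 0"
      proof -
        have "u (Suc N) - 1 \<le> n" using ule[of "Suc N"] mN tn by simp
        then show ?thesis using monoB[of "u (Suc N) - 1" n] monoB[of 0 "u 1 - 1"] by simp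
      qed
      finally show ?thesis .
    qed
    have "(\<Sum>q<N. y q) \<le> 2 powr p * (3 * (Fb n - Fb 0))"
      unfolding e by (rule mult_left_mono) (use t1 t2 t3 in auto)
    then show ?thesis unfolding Y_def by (simp add: algebra_simps)
  qed
  obtain q where q: "q < N" and xy: "x q * y q \<le> X * Y / (real N)^2"
    using ph[OF N1 nn sx sy] by blast
  have q1: "u (Suc q) < u (Suc (Suc q))" "u q < u (Suc q)" using inc q mN by auto
  have q2: "u (Suc (Suc q)) \<le> n" using ule[of "Suc (Suc q)"] q mN tn by simp
  have q3: "0 < u (Suc q)" using q1 by simp
  define A where "A = Asum a (u (Suc q)) (u (Suc (Suc q)))"
  define B where "B = b (u (Suc q) + 1) - b (u q + 1)"
  have pp: "0 < p" using p by simp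
  have hA: "\<bar>A\<bar> powr p \<le> x q" unfolding A_def x_def using Ha[OF q1(1) q2] .
  have hB: "\<bar>B\<bar> powr p \<le> y q"
  proof -
    have h1: "\<bar>b (u (Suc q) + 1) - b (u (Suc q) - 1 + 1)\<bar> powr p \<le> Fb (u (Suc q) + 1) - Fb (u (Suc q) - 1)"
      by (rule Hb) (use q1 q2 in auto)
    have h2: "\<bar>b (u (Suc q)) - b (u q + 1)\<bar> powr p \<le> Fb (u (Suc q)) - Fb (u q)"
      by (rule Hb) (use q1 q2 in auto)
    have e: "u (Suc q) - 1 + 1 = u (Suc q)" using q3 by simp
    have "B = (b (u (Suc q) + 1) - b (u (Suc q) - 1 + 1)) + (b (u (Suc q)) - b (u q + 1))"
      unfolding B_def e by simp
    then have "\<bar>B\<bar> powr p \<le> 2 powr p * (\<bar>b (u (Suc q) + 1) - b (u (Suc q) - 1 + 1)\<bar> powr p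
                 + \<bar>b (u (Suc q)) - b (u q + 1)\<bar> powr p)"
      using pow2[OF pp] by simp
    also have "\<dots> \<le> y q" unfolding y_def using h1 h2 by (intro mult_left_mono) auto
    finally show ?thesis .
  qed
  have rA: "\<bar>A\<bar> \<le> x q powr (1 / p)"
  proof -
    have "\<bar>A\<bar> = (\<bar>A\<bar> powr p) powr (1 / p)" using pp by (simp add: powr_powr)
    also have "\<dots> \<le> x q powr (1 / p)" using hA pp by (intro powr_mono2) auto
    finally show ?thesis .
  qed
  have rB: "\<bar>B\<bar> \<le> y q powr (1 / p)"
  proof -
    have "\<bar>B\<bar> = (\<bar>B\<bar> powr p) powr (1 / p)" using pp by (simp add: powr_powr)
    also have "\<dots> \<le> y q powr (1 / p)" using hB pp by (intro powr_mono2) auto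
    finally show ?thesis .
  qed
  have "\<bar>A * B\<bar> \<le> x q powr (1 / p) * y q powr (1 / p)"
    unfolding abs_mult using rA rB by (intro mult_mono) auto
  also have "\<dots> = (x q * y q) powr (1 / p)" by (simp add: powr_mult)
  also have "\<dots> \<le> (X * Y / (real N)^2) powr (1 / p)"
    using xy nn[OF q] pp by (intro powr_mono2) auto
  also have "\<dots> = (X * Y) powr (1 / p) * real N powr (- (2 / p))"
  proof -
    have N0: "0 < real N" using N1 by simp
    have "(real N)^2 = real N powr 2" using N0 by simp
    then have "((real N)^2) powr (1 / p) = (real N powr 2) powr (1 / p)"
      by (simp only:)
    also have "\<dots> = real N powr (2 / p)" unfolding powr_powr by simp
    finally have "((real N)^2) powr (1 / p) = real N powr (2 / p)" .
    then have "(X * Y / (real N)^2) powr (1 / p) = (X * Y) powr (1 / p) / real N powr (2 / p)"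
      by (simp add: powr_divide)
    also have "\<dots> = (X * Y) powr (1 / p) * real N powr (- (2 / p))"
      by (simp add: powr_minus_divide)
    finally show ?thesis .
  qed
  finally have fin: "\<bar>A * B\<bar> \<le> (X * Y) powr (1 / p) * real N powr (- (2 / p))" .
  show ?thesis
  proof -
    have "Suc q < m" using q mN by simp
    then show ?thesis using fin unfolding A_def B_def X_def Y_def N_def by blast
  qed
qed



lemma shift_sum: "(\<Sum>r<(m::nat). f (s + r + 1)) = (\<Sum>l\<in>{s<..s + m}. (f l :: real))"
proof (induction m)
  case (Suc m)
  have "{s<..s + Suc m} = insert (s + m + 1) {s<..s + m}" by auto
  then show ?case using Suc by simp
qed simp

lemma young_block:
  fixes a b Fa Fb :: "nat \<Rightarrow> real"
  assumes p: "1 \<le> p" "p < 2" and st: "s < t" and tn: "t \<le> n"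
    and monoA: "\<And>x y. x \<le> y \<Longrightarrow> Fa x \<le> Fa y"
    and monoB: "\<And>x y. x \<le> y \<Longrightarrow> Fb x \<le> Fb y"
    and Ha: "\<And>x y. x < y \<Longrightarrow> y \<le> n \<Longrightarrow> \<bar>Asum a x y\<bar> powr p \<le> Fa y - Fa x"
    and Hb: "\<And>x y. x < y \<Longrightarrow> y \<le> n \<Longrightarrow> \<bar>b y - b (x + 1)\<bar> powr p \<le> Fb y - Fb x"
  shows "\<bar>\<Sum>l\<in>{s<..t}. a l * (b l - b (s + 1))\<bar>
     \<le> ((Fa t - Fa s) * (3 * 2 powr p * (Fb n - Fb 0))) powr (1 / p) * (\<Sum>k. real k powr (- (2 / p)))"
proof -
  define K where "K = ((Fa t - Fa s) * (3 * 2 powr p * (Fb n - Fb 0))) powr (1 / p)"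
  define u where "u r = s + r" for r
  define m where "m = t - s"
  have m1: "1 \<le> m" using st unfolding m_def by simp
  have Y: "\<bar>RS a b s u m\<bar> \<le> K * (\<Sum>k\<in>{1..<m}. real k powr (- (2 / p)))"
    unfolding K_def
  proof (rule young_ind[where t = t])
    fix m' u'
    assume as: "2 \<le> m'" "\<forall>j<m'. u' j < u' (Suc j)" "u' 0 = s" "u' m' = t"
    show "\<exists>q. Suc q < m' \<and> \<bar>Asum a (u' (Suc q)) (u' (Suc (Suc q))) * (b (u' (Suc q) + 1) - b (u' q + 1))\<bar>
            \<le> ((Fa t - Fa s) * (3 * 2 powr p * (Fb n - Fb 0))) powr (1 / p) * real (m' - 1) powr (- (2 / p))"
      by (rule H_holds[where a=a and b=b and Fa=Fa and Fb=Fb and p=p and n=n and s=s and t=t])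
         (use p st tn monoA monoB Ha Hb as in auto)
  qed (use m1 st in \<open>auto simp: u_def m_def\<close>)
  have sm: "summable (\<lambda>k. real k powr (- (2 / p)))"
    using summable_real_powr_iff[of "- (2 / p)"] p by (simp add: field_simps)
  have "(\<Sum>k\<in>{1..<m}. real k powr (- (2 / p))) \<le> (\<Sum>k. real k powr (- (2 / p)))"
    by (rule sum_le_suminf[OF sm]) auto
  moreover have "0 \<le> K" unfolding K_def by simp
  ultimately have "K * (\<Sum>k\<in>{1..<m}. real k powr (- (2 / p))) \<le> K * (\<Sum>k. real k powr (- (2 / p)))"
    by (rule mult_left_mono)
  moreover have "RS a b s u m = (\<Sum>l\<in>{s<..t}. a l * (b l - b (s + 1)))"
  proof -
    have "RS a b s u m = (\<Sum>r<m. a (s + r + 1) * (b (s + r + 1) - b (s + 1)))"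
    proof (unfold RS_def, rule sum.cong)
      fix r
      have "{s + r<..s + Suc r} = {s + r + 1}" by auto
      then show "Asum a (u r) (u (Suc r)) * (b (u r + 1) - b (s + 1)) = a (s + r + 1) * (b (s + r + 1) - b (s + 1))"
        unfolding u_def Asum_def by simp
    qed simp
    also have "\<dots> = (\<Sum>l\<in>{s<..s + m}. a l * (b l - b (s + 1)))"
      by (rule shift_sum)
    also have "s + m = t" using st unfolding m_def by simp
    finally show ?thesis .
  qed
  ultimately show ?thesis using Y unfolding K_def by simp
qed



lemma block_bound:
  fixes a b Fa Fb :: "nat \<Rightarrow> real"
  assumes p: "1 \<le> p" "p < 2" and st: "s < t" and tn: "t \<le> n"
    and monoA: "\<And>x y. x \<le> y \<Longrightarrow> Fa x \<le> Fa y"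
    and monoB: "\<And>x y. x \<le> y \<Longrightarrow> Fb x \<le> Fb y"
    and Ha: "\<And>x y. x < y \<Longrightarrow> y \<le> n \<Longrightarrow> \<bar>Asum a x y\<bar> powr p \<le> Fa y - Fa x"
    and Hb: "\<And>x y. x < y \<Longrightarrow> y \<le> n \<Longrightarrow> \<bar>b y - b (x + 1)\<bar> powr p \<le> Fb y - Fb x"
    and Fb0: "Fb 0 = 0"
    and beta: "\<bar>b (s + 1)\<bar> \<le> \<beta>"
  shows "\<bar>\<Sum>l\<in>{s<..t}. a l * b l\<bar> powr p
     \<le> 2 powr p * (\<beta> powr p + (\<Sum>k. real k powr (- (2 / p))) powr p * (3 * 2 powr p * Fb n)) * (Fa t - Fa s)"
proof -
  define Z where "Z = (\<Sum>k. real k powr (- (2 / p)))"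
  define X where "X = Fa t - Fa s"
  define Yc where "Yc = 3 * 2 powr p * Fb n"
  define A where "A = Asum a s t"
  define R where "R = (\<Sum>l\<in>{s<..t}. a l * (b l - b (s + 1)))"
  have pp: "0 < p" using p by simp
  have X0: "0 \<le> X" unfolding X_def using monoA[of s t] st by simp
  have Y0: "0 \<le> Yc" unfolding Yc_def using monoB[of 0 n] Fb0 by simp
  have Z0: "0 \<le> Z"
  proof -
    have sm: "summable (\<lambda>k. real k powr (- (2 / p)))"
      using summable_real_powr_iff[of "- (2 / p)"] p by (simp add: field_simps)
    show ?thesis unfolding Z_def by (rule suminf_nonneg[OF sm]) simp
  qed
  have eq: "(\<Sum>l\<in>{s<..t}. a l * b l) = b (s + 1) * A + R"
    unfolding A_def R_def Asum_def
    by (simp add: sum_distrib_left sum.distrib[symmetric] algebra_simps)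
  have hR: "\<bar>R\<bar> \<le> (X * Yc) powr (1 / p) * Z"
    using young_block[where a=a and b=b and Fa=Fa and Fb=Fb and p=p and s=s and t=t and n=n, OF p st tn monoA monoB Ha Hb] unfolding R_def X_def Yc_def Z_def Fb0 by simp
  have hR': "\<bar>R\<bar> powr p \<le> Z powr p * Yc * X"
  proof -
    have "\<bar>R\<bar> powr p \<le> ((X * Yc) powr (1 / p) * Z) powr p"
      using hR pp by (intro powr_mono2) auto
    also have "\<dots> = ((X * Yc) powr (1 / p)) powr p * Z powr p" by (simp add: powr_mult)
    also have "((X * Yc) powr (1 / p)) powr p = X * Yc"
      using pp X0 Y0 by (simp add: powr_powr)
    finally show ?thesis by (simp add: algebra_simps)
  qed
  have hA: "\<bar>A\<bar> powr p \<le> X" unfolding A_def X_def using Ha[OF st tn] .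
  have hbA: "\<bar>b (s + 1) * A\<bar> powr p \<le> \<beta> powr p * X"
  proof -
    have "\<bar>b (s + 1) * A\<bar> powr p = \<bar>b (s + 1)\<bar> powr p * \<bar>A\<bar> powr p" by (simp add: abs_mult powr_mult)
    also have "\<dots> \<le> \<beta> powr p * X"
      using beta hA pp by (intro mult_mono powr_mono2) auto
    finally show ?thesis .
  qed
  have "\<bar>\<Sum>l\<in>{s<..t}. a l * b l\<bar> powr p \<le> 2 powr p * (\<bar>b (s + 1) * A\<bar> powr p + \<bar>R\<bar> powr p)"
    unfolding eq by (rule pow2[OF pp])
  also have "\<dots> \<le> 2 powr p * (\<beta> powr p * X + Z powr p * Yc * X)"
    using hbA hR' by (intro mult_left_mono add_mono) auto
  also have "\<dots> = 2 powr p * (\<beta> powr p + Z powr p * Yc) * X" by (simp add: algebra_simps)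
  finally show ?thesis unfolding Z_def Yc_def X_def .
qed



lemma sup_norm_ge: "1 \<le> i \<Longrightarrow> i \<le> n \<Longrightarrow> \<bar>b i\<bar> \<le> sup_norm n b"
proof -
  assume "1 \<le> i" "i \<le> n"
  have fin: "finite {\<bar>b i\<bar> | i. 1 \<le> i \<and> i \<le> n}"
  proof -
    have "{\<bar>b i\<bar> | i. 1 \<le> i \<and> i \<le> n} = (\<lambda>i. \<bar>b i\<bar>) ` {1..n}" by auto
    then show ?thesis by simp
  qed
  show ?thesis unfolding sup_norm_def by (rule Max_ge) (use fin \<open>1 \<le> i\<close> \<open>i \<le> n\<close> in auto)
qed

lemma sup_norm_nonneg: "0 \<le> sup_norm n b"
proof -
  have fin: "finite {\<bar>b i\<bar> | i. 1 \<le> i \<and> i \<le> n}"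
  proof -
    have "{\<bar>b i\<bar> | i. 1 \<le> i \<and> i \<le> n} = (\<lambda>i. \<bar>b i\<bar>) ` {1..n}" by auto
    then show ?thesis by simp
  qed
  show ?thesis unfolding sup_norm_def by (rule Max_ge) (use fin in auto)
qed

theorem corollary2p4:
  fixes p :: real
  assumes "1 \<le> p" and "p < 2"
  shows "\<exists>C>0. \<forall>(n::nat) (a::nat \<Rightarrow> real) (b::nat \<Rightarrow> real).
           s_var p n (\<lambda>i. a i * b i) \<le> C * s_var p n a * (sup_norm n b + v_var p n b)"
proof -
  have pp: "0 < p" using assms by simp
  define Z where "Z = (\<Sum>k. real k powr (- (2 / p)))"
  define D where "D = max 1 (Z powr p * (3 * 2 powr p))"
  define C where "C = 2 * (2 * D) powr (1 / p)"
  have D1: "1 \<le> D" unfolding D_def by simp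
  show ?thesis
  proof (intro exI[of _ C] conjI allI)
    show "0 < C" unfolding C_def using D1 by simp
  next
    fix n :: nat and a b :: "nat \<Rightarrow> real"
    define fa where "fa = (\<lambda>x y. \<bar>\<Sum>l\<in>{x<..y}. a l\<bar> powr p)"
    define fb where "fb = (\<lambda>x y. \<bar>b y - b (x + 1)\<bar> powr p)"
    define fab where "fab = (\<lambda>x y. \<bar>\<Sum>l\<in>{x<..y}. a l * b l\<bar> powr p)"
    define Fa where "Fa = PF fa"
    define Fb where "Fb = PF fb"
    have sa: "s_var p n a = Fa n powr (1 / p)" unfolding s_var_def Fa_def PF_def PS_def fa_def by simp
    have sab: "s_var p n (\<lambda>i. a i * b i) = PF fab n powr (1 / p)"
      unfolding s_var_def PF_def PS_def fab_def by simp
    have vb: "v_var p n b = Fb n powr (1 / p)" unfolding v_var_def Fb_def PF_def PS_def fb_def by simp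
    define \<beta> where "\<beta> = sup_norm n b"
    define v where "v = v_var p n b"
    define \<sigma> where "\<sigma> = s_var p n a"
    have fa0: "\<And>x y. 0 \<le> fa x y" unfolding fa_def by simp
    have fb0: "\<And>x y. 0 \<le> fb x y" unfolding fb_def by simp
    have monoA: "\<And>x y. x \<le> y \<Longrightarrow> Fa x \<le> Fa y" unfolding Fa_def by (rule PF_mono[OF fa0])
    have monoB: "\<And>x y. x \<le> y \<Longrightarrow> Fb x \<le> Fb y" unfolding Fb_def by (rule PF_mono[OF fb0])
    have Ha: "\<And>x y. x < y \<Longrightarrow> y \<le> n \<Longrightarrow> \<bar>Asum a x y\<bar> powr p \<le> Fa y - Fa x"
      using PF_ext[of _ _ fa] unfolding Fa_def fa_def Asum_def by fastforce
    have Hb: "\<And>x y. x < y \<Longrightarrow> y \<le> n \<Longrightarrow> \<bar>b y - b (x + 1)\<bar> powr p \<le> Fb y - Fb x"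
      using PF_ext[of _ _ fb] unfolding Fb_def fb_def by fastforce
    have Fa0: "Fa 0 = 0" and Fb0: "Fb 0 = 0" unfolding Fa_def Fb_def by (rule PF_zero)+
    have Fan: "0 \<le> Fa n" unfolding Fa_def by (rule PF_nonneg[OF fa0])
    have Fbn: "0 \<le> Fb n" unfolding Fb_def by (rule PF_nonneg[OF fb0])
    have b0: "0 \<le> \<beta>" unfolding \<beta>_def by (rule sup_norm_nonneg)
    have v0: "0 \<le> v" unfolding v_def vb by simp
    have vp: "v powr p = Fb n" unfolding v_def vb using pp Fbn by (simp add: powr_powr)
    define G where "G = 2 powr p * (\<beta> powr p + Z powr p * (3 * 2 powr p * Fb n))"
    have Gnn: "0 \<le> G" unfolding G_def using Fbn by simp
    have main: "PF fab n \<le> G * Fa n"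
    proof (rule PF_le)
      fix k i assume P: "is_partition n k i"
      have inc: "\<forall>j<k. i j < i (Suc j)" and ik: "i k = n" and i0: "i 0 = 0"
        using P by (auto simp: is_partition_def)
      have "(\<Sum>j<k. fab (i j) (i (Suc j))) \<le> (\<Sum>j<k. G * (Fa (i (Suc j)) - Fa (i j)))"
      proof (rule sum_mono)
        fix j assume j: "j \<in> {..<k}"
        have lt: "i j < i (Suc j)" using inc j by simp
        have le: "i (Suc j) \<le> n" using incr_mono[OF inc, of "Suc j" k] j ik by simp
        have bb: "\<bar>b (i j + 1)\<bar> \<le> \<beta>" unfolding \<beta>_def by (rule sup_norm_ge) (use lt le in auto)
        show "fab (i j) (i (Suc j)) \<le> G * (Fa (i (Suc j)) - Fa (i j))"
          unfolding fab_def G_def Z_def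
          by (rule block_bound[where a=a and b=b and Fa=Fa and Fb=Fb and p=p and n=n,
                OF assms lt le monoA monoB Ha Hb Fb0 bb])
      qed
      also have "\<dots> = G * (Fa (i k) - Fa (i 0))"
        by (simp add: sum_distrib_left[symmetric] sum_lessThan_telescope[of "\<lambda>j. Fa (i j)"])
      also have "\<dots> = G * Fa n" using ik i0 Fa0 by simp
      finally show "(\<Sum>j<k. fab (i j) (i (Suc j))) \<le> G * Fa n" .
    qed
    have G0: "G \<le> 2 powr p * (2 * D) * (\<beta> + v) powr p"
    proof -
      have "\<beta> powr p + Z powr p * (3 * 2 powr p * Fb n) \<le> D * \<beta> powr p + D * v powr p"
      proof (rule add_mono)
        show "\<beta> powr p \<le> D * \<beta> powr p" using D1 by (simp add: mult_le_cancel_right1)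
        have "Z powr p * (3 * 2 powr p) \<le> D" unfolding D_def by simp
        then show "Z powr p * (3 * 2 powr p * Fb n) \<le> D * v powr p"
          unfolding vp using Fbn by (metis mult.assoc mult_right_mono)
      qed
      also have "\<dots> \<le> D * (\<beta> + v) powr p + D * (\<beta> + v) powr p"
        using D1 b0 v0 pp by (intro add_mono mult_left_mono powr_mono2) auto
      also have "\<dots> = (2 * D) * (\<beta> + v) powr p" by simp
      finally show ?thesis unfolding G_def by (simp add: mult.assoc)
    qed
    have "s_var p n (\<lambda>i. a i * b i) \<le> (G * Fa n) powr (1 / p)"
      unfolding sab using main pp PF_nonneg[of fab n] by (intro powr_mono2) (auto simp: fab_def)
    also have "\<dots> \<le> (2 powr p * (2 * D) * (\<beta> + v) powr p * Fa n) powr (1 / p)"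
      using G0 Fan pp Gnn by (intro powr_mono2 mult_right_mono) auto
    also have "\<dots> = (2 powr p) powr (1 / p) * (2 * D) powr (1 / p) * ((\<beta> + v) powr p) powr (1 / p) * Fa n powr (1 / p)"
      by (simp add: powr_mult)
    also have "\<dots> = C * \<sigma> * (\<beta> + v)"
      using pp b0 v0 unfolding C_def \<sigma>_def sa by (simp add: powr_powr)
    finally show "s_var p n (\<lambda>i. a i * b i) \<le> C * s_var p n a * (sup_norm n b + v_var p n b)"
      unfolding \<sigma>_def \<beta>_def v_def .
  qed
qed

end
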